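(* For every $n\ge 3$ and every $0\le h\le n-2$, $\kappa_s^{(h)}(S_{n,2})=n-1$.
   Context: For integers $1\le k\le n-1$, let $I_n=\{1,\dots,n\}$ and $P(n,k)$ the set of $k$-permutations $p_1p_2\cdots p_k$ of distinct elements of $I_n$. The $(n,k)$-star graph $S_{n,k}$ has vertex set $P(n,k)$; a vertex $p=p_1p_2\cdots p_k$ is adjacent to (a) each vertex obtained by swapping $p_1$ with $p_i$ for $2\le i\le k$, and (b) each vertex $\alpha p_2\cdots p_k$ with $\alpha\in I_n\setminus\{p_1,\dots,p_k\}$. For a connected graph $G$ and integer $h\ge 0$, a set $S\subseteq V(G)$ is an $h$-cut if $G-S$ is disconnected and has minimum degree at least $h$; $\kappa_s^{(h)}(G)$ is the minimum cardinality of an $h$-cut of $G$. *)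

theory Defs
  imports Main
begin

definition induced_connected :: "'a set \<Rightarrow> ('a \<Rightarrow> 'a \<Rightarrow> bool) \<Rightarrow> bool" where
  "induced_connected W E \<longleftrightarrow> W \<noteq> {} \<and>
     (\<forall>x\<in>W. \<forall>y\<in>W. (\<lambda>u v. u \<in> W \<and> v \<in> W \<and> E u v)\<^sup>*\<^sup>* x y)"

definition induced_degree :: "'a set \<Rightarrow> ('a \<Rightarrow> 'a \<Rightarrow> bool) \<Rightarrow> 'a \<Rightarrow> nat" where
  "induced_degree W E v = card {u \<in> W. E v u}"

definition is_h_cut :: "'a set \<Rightarrow> ('a \<Rightarrow> 'a \<Rightarrow> bool) \<Rightarrow> nat \<Rightarrow> 'a set \<Rightarrow> bool" where
  "is_h_cut V E h S \<longleftrightarrow> S \<subseteq> V \<and> V - S \<noteq> {} \<and> \<not> induced_connected (V - S) E \<and>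
     (\<forall>v \<in> V - S. induced_degree (V - S) E v \<ge> h)"

definition kappa_s :: "'a set \<Rightarrow> ('a \<Rightarrow> 'a \<Rightarrow> bool) \<Rightarrow> nat \<Rightarrow> nat" where
  "kappa_s V E h = Inf {card S | S. is_h_cut V E h S}"

text \<open>(n,k)-star graph: vertices are k-permutations of {1..n}, represented as lists.\<close>
definition star_verts :: "nat \<Rightarrow> nat \<Rightarrow> nat list set" where
  "star_verts n k = {p. length p = k \<and> distinct p \<and> set p \<subseteq> {1..n}}"

definition swap0 :: "nat list \<Rightarrow> nat \<Rightarrow> nat list" where
  "swap0 p i = p[0 := p ! i, i := p ! 0]"

definition star_adj :: "nat \<Rightarrow> nat \<Rightarrow> nat list \<Rightarrow> nat list \<Rightarrow> bool" where
  "star_adj n k p q \<longleftrightarrow> p \<in> star_verts n k \<and> q \<in> star_verts n k \<and>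
     ((\<exists>i. 1 \<le> i \<and> i < k \<and> q = swap0 p i) \<or>
      (\<exists>a \<in> {1..n} - set p. q = p[0 := a]))"

end

theory Submission
  imports Defs
begin

lemma len2: "length p = 2 \<Longrightarrow> p = [p!0, p!1]"
  by (cases p; cases "tl p"; auto)

lemma sv2: "[a,b] \<in> star_verts n 2 \<longleftrightarrow> a \<noteq> b \<and> a \<in> {1..n} \<and> b \<in> {1..n}"
  by (auto simp: star_verts_def)

lemma sv_elem: "p \<in> star_verts n 2 \<Longrightarrow> \<exists>a b. p = [a,b] \<and> a \<noteq> b \<and> a \<in> {1..n} \<and> b \<in> {1..n}"
  apply (rule exI[of _ "p!0"], rule exI[of _ "p!1"])
  using len2[of p] sv2[of "p!0" "p!1" n] by (auto simp: star_verts_def)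

lemma sv_finite: "finite (star_verts n k)"
proof -
  have "star_verts n k \<subseteq> {xs. set xs \<subseteq> {1..n} \<and> length xs = k}"
    by (auto simp: star_verts_def)
  thus ?thesis using finite_lists_length_eq[of "{1..n}" k] finite_subset by blast
qed

lemma adj2: "star_adj n 2 [a,b] q \<longleftrightarrow> [a,b] \<in> star_verts n 2 \<and> q \<in> star_verts n 2 \<and>
   (q = [b,a] \<or> (\<exists>e. e \<in> {1..n} \<and> e \<noteq> a \<and> e \<noteq> b \<and> q = [e,b]))"
proof -
  have "(\<exists>i. 1 \<le> i \<and> i < (2::nat) \<and> q = swap0 [a,b] i) \<longleftrightarrow> q = [b,a]"
  proof
    assume "\<exists>i. 1 \<le> i \<and> i < (2::nat) \<and> q = swap0 [a,b] i"
    then obtain i where "1 \<le> i" "i < (2::nat)" "q = swap0 [a,b] i" by blast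
    hence "i = 1" by auto
    with \<open>q = swap0 [a,b] i\<close> show "q = [b,a]" by (simp add: swap0_def)
  next
    assume "q = [b,a]" thus "\<exists>i. 1 \<le> i \<and> i < (2::nat) \<and> q = swap0 [a,b] i"
      by (intro exI[of _ 1]) (simp add: swap0_def)
  qed
  thus ?thesis unfolding star_adj_def by auto
qed

lemma clique_R:
  assumes "[x,q] \<in> W" "[y,q] \<in> W" "W \<subseteq> star_verts n 2"
  shows "(\<lambda>u v. u \<in> W \<and> v \<in> W \<and> star_adj n 2 u v)\<^sup>*\<^sup>* [x,q] [y,q]"
proof (cases "x = y")
  case True thus ?thesis by simp
next
  case False
  have "[x,q] \<in> star_verts n 2" "[y,q] \<in> star_verts n 2" using assms by auto
  hence "star_adj n 2 [x,q] [y,q]" using False by (auto simp: adj2 sv2)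
  thus ?thesis using assms by (intro r_into_rtranclp) auto
qed

lemma swap_R:
  assumes "[x,q] \<in> W" "[q,x] \<in> W" "W \<subseteq> star_verts n 2"
  shows "(\<lambda>u v. u \<in> W \<and> v \<in> W \<and> star_adj n 2 u v)\<^sup>*\<^sup>* [x,q] [q,x]"
proof -
  have "[x,q] \<in> star_verts n 2" "[q,x] \<in> star_verts n 2" using assms by auto
  hence "star_adj n 2 [x,q] [q,x]" by (auto simp: adj2)
  thus ?thesis using assms by (intro r_into_rtranclp) auto
qed

lemma lower:
  assumes S: "S \<subseteq> star_verts n 2" and nc: "\<not> induced_connected (star_verts n 2 - S) (star_adj n 2)"
    and ne: "star_verts n 2 - S \<noteq> {}"
  shows "n - 1 \<le> card S"
proof (rule ccontr)
  assume small: "\<not> n - 1 \<le> card S"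
  define W where "W = star_verts n 2 - S"
  have WV: "W \<subseteq> star_verts n 2" by (auto simp: W_def)
  have finS: "finite S" using S sv_finite finite_subset by blast
  let ?R = "(\<lambda>u v. u \<in> W \<and> v \<in> W \<and> star_adj n 2 u v)\<^sup>*\<^sup>*"
  have "\<forall>x\<in>W. \<forall>y\<in>W. ?R x y"
  proof (intro ballI)
    fix u v assume u: "u \<in> W" and v: "v \<in> W"
    obtain a b where ab: "u = [a,b]" "a \<noteq> b" "a \<in> {1..n}" "b \<in> {1..n}"
      using sv_elem u WV by blast
    obtain e c where ec: "v = [e,c]" "e \<noteq> c" "e \<in> {1..n}" "c \<in> {1..n}"
      using sv_elem v WV by blast
    show "?R u v"
    proof (cases "b = c")
      case True thus ?thesis using clique_R[OF _ _ WV] u v ab ec by auto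
    next
      case bc: False
      have "\<exists>d\<in>{1..n}-{b}. [d,b] \<notin> S \<and> [b,d] \<notin> S \<and> [c,d] \<notin> S \<and> [d,c] \<notin> S"
      proof (rule ccontr)
        assume H: "\<not> ?thesis"
        define g where "g x = (if x!1 = b then x!0 else if x!0 = b then x!1 else if x!0 = c then x!1 else x!0)" for x :: "nat list"
        have "{1..n}-{b} \<subseteq> g ` S"
        proof
          fix d assume d: "d \<in> {1..n}-{b}"
          hence "[d,b] \<in> S \<or> [b,d] \<in> S \<or> [c,d] \<in> S \<or> [d,c] \<in> S" using H by blast
          moreover have "g [d,b] = d" "g [b,d] = d" "g [c,d] = d" "g [d,c] = d"
            using d bc by (auto simp: g_def)
          ultimately show "d \<in> g ` S" by (metis imageI)
        qed
        hence "card ({1..n}-{b}) \<le> card (g ` S)" using finS by (intro card_mono) auto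
        also have "\<dots> \<le> card S" using finS card_image_le by blast
        finally have "card ({1..n}-{b}) \<le> card S" .
        moreover have "card ({1..n}-{b}) = n - 1" using ab by simp
        ultimately show False using small by simp
      qed
      then obtain d where d: "d \<in> {1..n}" "d \<noteq> b" "[d,b] \<notin> S" "[b,d] \<notin> S" "[c,d] \<notin> S" "[d,c] \<notin> S"
        by blast
      have w1: "[d,b] \<in> W" "[b,d] \<in> W" using d ab by (auto simp: W_def sv2)
      have p1: "?R u [d,b]" using clique_R[OF _ _ WV] u w1 ab by auto
      have p2: "?R [d,b] [b,d]" using swap_R[OF _ _ WV] w1 by auto
      show ?thesis
      proof (cases "d = c")
        case True
        have "?R [b,d] v" using clique_R[OF _ _ WV] w1 v ec True by auto
        thus ?thesis using p1 p2 by (meson rtranclp_trans)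
      next
        case False
        have w3: "[c,d] \<in> W" "[d,c] \<in> W" using d ec bc False by (auto simp: W_def sv2)
        have "?R [b,d] [c,d]" using clique_R[OF _ _ WV] w1 w3 by auto
        moreover have "?R [c,d] [d,c]" using swap_R[OF _ _ WV] w3 by auto
        moreover have "?R [d,c] v" using clique_R[OF _ _ WV] w3 v ec by auto
        ultimately show ?thesis using p1 p2 by (meson rtranclp_trans)
      qed
    qed
  qed
  hence "induced_connected W (star_adj n 2)" using ne by (auto simp: induced_connected_def W_def)
  thus False using nc by (simp add: W_def)
qed

lemma upper:
  assumes n: "n \<ge> 3" and h: "h \<le> n - 2"
  shows "is_h_cut (star_verts n 2) (star_adj n 2) h ((\<lambda>x. [1,x]) ` {2..n})"
proof -
  define S where "S = (\<lambda>x. [1,x]) ` {2..n}"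
  define W where "W = star_verts n 2 - S"
  have SV: "S \<subseteq> star_verts n 2" by (auto simp: S_def sv2)
  have inW: "[x,y] \<in> W \<longleftrightarrow> x \<noteq> y \<and> x \<in> {1..n} \<and> y \<in> {1..n} \<and> x \<noteq> 1" for x y
    by (auto simp: W_def S_def sv2)
  have w21: "[2,1] \<in> W" and w23: "[2,3] \<in> W" using n by (auto simp: inW)
  let ?R = "(\<lambda>u v. u \<in> W \<and> v \<in> W \<and> star_adj n 2 u v)\<^sup>*\<^sup>*"
  have inv: "?R x y \<Longrightarrow> x ! 1 = 1 \<Longrightarrow> y ! 1 = 1" for x y
  proof (induction rule: rtranclp_induct)
    case base thus ?case .
  next
    case (step y z)
    then have yW: "y \<in> W" "z \<in> W" "star_adj n 2 y z" "y ! 1 = 1" by auto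
    have "y \<in> star_verts n 2" using yW(1) by (simp add: W_def)
    then obtain a b where ab: "y = [a,b]" using sv_elem by blast
    have "z = [b,a] \<or> (\<exists>e. z = [e,b])" using yW(3) ab by (auto simp: adj2)
    moreover have "z \<noteq> [b,a]" using yW ab inW by auto
    ultimately show ?case using ab yW by auto
  qed
  have "\<not> ?R [2,1] [2,3]" using inv[of "[2,1]" "[2,3]"] by auto
  hence nc: "\<not> induced_connected W (star_adj n 2)" using w21 w23
    by (auto simp: induced_connected_def)
  have deg: "induced_degree W (star_adj n 2) v \<ge> h" if v: "v \<in> W" for v
  proof -
    have "v \<in> star_verts n 2" using v by (simp add: W_def)
    then obtain p q where pq: "v = [p,q]" using sv_elem by blast
    hence pq2: "p \<noteq> q" "p \<in> {1..n}" "q \<in> {1..n}" "p \<noteq> 1" using v inW by auto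
    have fin: "finite {u \<in> W. star_adj n 2 v u}"
      using sv_finite[of n 2] by (rule finite_subset[rotated]) (auto simp: W_def)
    have "n - 2 \<le> card {u \<in> W. star_adj n 2 v u}"
    proof (cases "q = 1")
      case True
      have sub: "(\<lambda>x. [x,1]) ` ({2..n} - {p}) \<subseteq> {u \<in> W. star_adj n 2 v u}"
        using pq pq2 True by (auto simp: inW adj2 sv2)
      have "card ((\<lambda>x. [x,1]) ` ({2..n} - {p})) = card ({2..n} - {p})"
        by (rule card_image) (auto simp: inj_on_def)
      also have "\<dots> = n - 2" using pq2 by simp
      finally show ?thesis using card_mono[OF fin sub] by simp
    next
      case False
      have sub: "insert [q,p] ((\<lambda>x. [x,q]) ` ({2..n} - {p,q})) \<subseteq> {u \<in> W. star_adj n 2 v u}"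
        using pq pq2 False by (auto simp: inW adj2 sv2)
      have "card (insert [q,p] ((\<lambda>x. [x,q]) ` ({2..n} - {p,q}))) = Suc (card ((\<lambda>x. [x,q]) ` ({2..n} - {p,q})))"
        using pq2 by (intro card_insert_disjoint) auto
      also have "card ((\<lambda>x. [x,q]) ` ({2..n} - {p,q})) = card ({2..n} - {p,q})"
        by (rule card_image) (auto simp: inj_on_def)
      also have "card ({2..n} - {p,q}) = n - 3" using pq2 False
        by (subst card_Diff_subset) auto
      finally show ?thesis using card_mono[OF fin sub] n by simp
    qed
    thus ?thesis using h by (simp add: induced_degree_def)
  qed
  show ?thesis unfolding is_h_cut_def S_def[symmetric] W_def[symmetric]
    using SV w21 nc deg by auto
qed

theorem corollary3p2:
  fixes n h :: nat
  assumes "n \<ge> 3" and "h \<le> n - 2"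
  shows "kappa_s (star_verts n 2) (star_adj n 2) h = n - 1"
proof -
  have c: "card ((\<lambda>x. [1::nat,x]) ` {2..n}) = n - 1"
    by (subst card_image) (auto simp: inj_on_def)
  show ?thesis unfolding kappa_s_def
  proof (rule cInf_eq_minimum)
    show "n - 1 \<in> {card S |S. is_h_cut (star_verts n 2) (star_adj n 2) h S}"
      using upper[OF assms] c by (metis (mono_tags, lifting) mem_Collect_eq)
  next
    fix x assume "x \<in> {card S |S. is_h_cut (star_verts n 2) (star_adj n 2) h S}"
    then obtain S where "x = card S" "is_h_cut (star_verts n 2) (star_adj n 2) h S" by blast
    thus "n - 1 \<le> x" using lower by (auto simp: is_h_cut_def)
  qed
qed

end
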